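(* For every $\alpha\in(0,1)\cup(1,\infty)$ and discrete memoryless channels $\mathcal W_1$ (from $\mathcal X_1$ to $\mathcal Y_1$) and $\mathcal W_2$ (from $\mathcal X_2$ to $\mathcal Y_2$), all alphabets finite, $U_\alpha(\mathcal W_1\times\mathcal W_2)=U_\alpha(\mathcal W_1)+U_\alpha(\mathcal W_2)$, where $(\mathcal W_1\times\mathcal W_2)(y_1,y_2|x_1,x_2)=\mathcal W_1(y_1|x_1)\mathcal W_2(y_2|x_2)$.
   Context: For $\alpha\in(0,1)\cup(1,\infty)$, $D_\alpha(P\|Q)=\frac1{\alpha-1}\log\sum_{x:P(x)>0}P(x)^\alpha Q(x)^{1-\alpha}$ ($+\infty$ if $\alpha>1$ and $P\not\ll Q$). For a channel $\mathcal W$, $U_\alpha(\mathcal W)=\max_{P_X}\min_{Q_Y}D_\alpha(P_X\times Q_Y\|P_{XY})$ with $P_{XY}(x,y)=P_X(x)\mathcal W(y|x)$. *)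

theory Defs
  imports "HOL-Analysis.Analysis"
begin

definition is_dist :: "('a::finite \<Rightarrow> real) \<Rightarrow> bool" where
  "is_dist P \<longleftrightarrow> (\<forall>x. 0 \<le> P x) \<and> (\<Sum>x\<in>UNIV. P x) = 1"

definition is_channel :: "('x::finite \<Rightarrow> 'y::finite \<Rightarrow> real) \<Rightarrow> bool" where
  "is_channel W \<longleftrightarrow> (\<forall>x. is_dist (W x))"

text \<open>It is infinite if alpha > 1 and P is not absolutely continuous w.r.t. Q;
  for alpha < 1 with vanishing sum, log 0 = -infinity times 1/(alpha-1) < 0 gives +infinity.\<close>
definition renyi_div :: "real \<Rightarrow> ('a::finite \<Rightarrow> real) \<Rightarrow> ('a \<Rightarrow> real) \<Rightarrow> ereal" where
  "renyi_div \<alpha> P Q =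
     (if \<alpha> > 1 \<and> \<not> (\<forall>x. P x > 0 \<longrightarrow> Q x > 0) then \<infinity>
      else (let s = (\<Sum>x\<in>{x. P x > 0}. P x powr \<alpha> * Q x powr (1 - \<alpha>))
            in if s = 0 then \<infinity> else ereal (ln s / (\<alpha> - 1))))"

definition U_alpha :: "real \<Rightarrow> ('x::finite \<Rightarrow> 'y::finite \<Rightarrow> real) \<Rightarrow> ereal" where
  "U_alpha \<alpha> W =
     (SUP P \<in> {P. is_dist P}. INF Q \<in> {Q. is_dist Q}.
        renyi_div \<alpha> (\<lambda>(x, y). P x * Q y) (\<lambda>(x, y). P x * W x y))"

definition prod_channel ::
  "('x1 \<Rightarrow> 'y1 \<Rightarrow> real) \<Rightarrow> ('x2 \<Rightarrow> 'y2 \<Rightarrow> real) \<Rightarrow> ('x1 \<times> 'x2) \<Rightarrow> ('y1 \<times> 'y2) \<Rightarrow> real" where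
  "prod_channel W1 W2 = (\<lambda>(x1, x2) (y1, y2). W1 x1 y1 * W2 x2 y2)"

end

theory Submission
  imports Defs
begin

lemma young0:
  fixes u v p q :: real
  assumes "0 < p" "0 < q" "p + q = 1" "0 \<le> u" "0 \<le> v"
  shows "u powr p * v powr q \<le> p * u + q * v"
proof (cases "u = 0 \<or> v = 0")
  case True then show ?thesis using assms by auto
next
  case False then show ?thesis using assms Youngs_inequality_0[of p q u v] by auto
qed

lemma holderA:
  fixes Q c :: "'y::finite \<Rightarrow> real" and \<alpha> :: real
  assumes a0: "0 < \<alpha>" and a1: "\<alpha> < 1" and Qn: "\<And>y. Q y \<ge> 0" and Qs: "(\<Sum>y\<in>UNIV. Q y) = 1"
    and cn: "\<And>y. c y \<ge> 0"
  shows "(\<Sum>y\<in>UNIV. Q y powr \<alpha> * c y) \<le> (\<Sum>y\<in>UNIV. c y powr (1/(1-\<alpha>))) powr (1-\<alpha>)"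
proof -
  define H where "H = (\<Sum>y\<in>UNIV. c y powr (1/(1-\<alpha>)))"
  have H0: "H \<ge> 0" unfolding H_def by (simp add: sum_nonneg)
  show ?thesis
  proof (cases "H = 0")
    case True
    then have "\<forall>y\<in>UNIV. c y powr (1/(1-\<alpha>)) = 0" unfolding H_def
      by (subst sum_nonneg_eq_0_iff[symmetric]) auto
    then have "\<And>y. c y = 0" by simp
    then show ?thesis using True H_def by simp
  next
    case False
    then have Hp: "H > 0" using H0 by simp
    have tm: "Q y powr \<alpha> * c y \<le> H powr (1-\<alpha>) * (\<alpha> * Q y + (1-\<alpha>) * (c y powr (1/(1-\<alpha>)) / H))" for y
    proof -
      have ceq: "c y = H powr (1-\<alpha>) * (c y powr (1/(1-\<alpha>)) / H) powr (1-\<alpha>)"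
        using Hp a1 cn[of y] by (simp add: powr_divide powr_powr)
      have "Q y powr \<alpha> * (c y powr (1/(1-\<alpha>)) / H) powr (1-\<alpha>) \<le> \<alpha> * Q y + (1-\<alpha>) * (c y powr (1/(1-\<alpha>)) / H)"
        using young0[of \<alpha> "1-\<alpha>" "Q y" "c y powr (1/(1-\<alpha>)) / H"] a0 a1 Qn[of y] Hp by auto
      then have "H powr (1-\<alpha>) * (Q y powr \<alpha> * (c y powr (1/(1-\<alpha>)) / H) powr (1-\<alpha>)) \<le> H powr (1-\<alpha>) * (\<alpha> * Q y + (1-\<alpha>) * (c y powr (1/(1-\<alpha>)) / H))"
        by (rule mult_left_mono) simp
      then show ?thesis by (subst ceq) (simp add: algebra_simps)
    qed
    have "(\<Sum>y\<in>UNIV. Q y powr \<alpha> * c y) \<le> (\<Sum>y\<in>UNIV. H powr (1-\<alpha>) * (\<alpha> * Q y + (1-\<alpha>) * (c y powr (1/(1-\<alpha>)) / H)))"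
      by (rule sum_mono) (rule tm)
    also have "\<dots> = H powr (1-\<alpha>) * (\<alpha> * (\<Sum>y\<in>UNIV. Q y) + (1-\<alpha>) * ((\<Sum>y\<in>UNIV. c y powr (1/(1-\<alpha>))) / H))"
      by (simp only: sum_distrib_left[symmetric] sum.distrib sum_divide_distrib)
    also have "\<dots> = H powr (1-\<alpha>)" using Qs Hp by (simp add: H_def[symmetric])
    finally show ?thesis by (simp add: H_def)
  qed
qed

lemma holderB:
  fixes Q c :: "'y::finite \<Rightarrow> real" and \<alpha> :: real and G :: "'y set"
  assumes a1: "1 < \<alpha>" and Qn: "\<And>y. Q y \<ge> 0" and Qs: "(\<Sum>y\<in>G. Q y) = 1"
    and cp: "\<And>y. y \<in> G \<Longrightarrow> c y > 0"
  shows "(\<Sum>y\<in>G. Q y powr \<alpha> * c y) \<ge> (\<Sum>y\<in>G. c y powr (1/(1-\<alpha>))) powr (1-\<alpha>)"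
proof -
  define H where "H = (\<Sum>y\<in>G. c y powr (1/(1-\<alpha>)))"
  define S where "S = (\<Sum>y\<in>G. Q y powr \<alpha> * c y)"
  have Gne: "G \<noteq> {}" using Qs by auto
  have Hp: "H > 0" unfolding H_def
    by (rule sum_pos) (use Gne cp in \<open>auto simp: less_le\<close>)
  have tm: "Q y \<le> (1/\<alpha>) * (Q y powr \<alpha> * c y * H powr (\<alpha>-1)) + ((\<alpha>-1)/\<alpha>) * (c y powr (1/(1-\<alpha>)) / H)"
    if yG: "y \<in> G" for y
  proof -
    have c0: "c y > 0" using cp yG by auto
    have e1: "(Q y powr \<alpha> * c y * H powr (\<alpha>-1)) powr (1/\<alpha>) = Q y * c y powr (1/\<alpha>) * H powr ((\<alpha>-1)/\<alpha>)"
      using a1 Qn[of y] by (simp add: powr_mult powr_powr)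
    have e2: "(c y powr (1/(1-\<alpha>)) / H) powr ((\<alpha>-1)/\<alpha>) = c y powr (-(1/\<alpha>)) / H powr ((\<alpha>-1)/\<alpha>)"
    proof -
      have "1/(1-\<alpha>) * ((\<alpha>-1)/\<alpha>) = -(1/\<alpha>)" using a1 by (simp add: field_simps)
      then show ?thesis by (simp add: powr_divide powr_powr)
    qed
    have e3: "c y powr (1/\<alpha>) * c y powr (-(1/\<alpha>)) = 1"
      using c0 by (simp flip: powr_add)
    have "(Q y powr \<alpha> * c y * H powr (\<alpha>-1)) powr (1/\<alpha>) * (c y powr (1/(1-\<alpha>)) / H) powr ((\<alpha>-1)/\<alpha>) = Q y"
      unfolding e1 e2 using Hp e3 by (simp add: field_simps)
    moreover have "(Q y powr \<alpha> * c y * H powr (\<alpha>-1)) powr (1/\<alpha>) * (c y powr (1/(1-\<alpha>)) / H) powr ((\<alpha>-1)/\<alpha>)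
       \<le> (1/\<alpha>) * (Q y powr \<alpha> * c y * H powr (\<alpha>-1)) + ((\<alpha>-1)/\<alpha>) * (c y powr (1/(1-\<alpha>)) / H)"
      by (rule young0) (use a1 c0 Hp in \<open>auto simp: field_simps\<close>)
    ultimately show ?thesis by simp
  qed
  have "(\<Sum>y\<in>G. Q y) \<le> (\<Sum>y\<in>G. (1/\<alpha>) * (Q y powr \<alpha> * c y * H powr (\<alpha>-1)) + ((\<alpha>-1)/\<alpha>) * (c y powr (1/(1-\<alpha>)) / H))"
    by (rule sum_mono) (rule tm)
  also have "\<dots> = (1/\<alpha>) * H powr (\<alpha>-1) * (\<Sum>y\<in>G. Q y powr \<alpha> * c y) + ((\<alpha>-1)/\<alpha>) * ((\<Sum>y\<in>G. c y powr (1/(1-\<alpha>))) / H)"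
    by (simp add: sum.distrib sum_distrib_left sum_divide_distrib algebra_simps)
  also have "\<dots> = (1/\<alpha>) * H powr (\<alpha>-1) * S + ((\<alpha>-1)/\<alpha>) * (H / H)"
    unfolding S_def H_def by simp
  also have "\<dots> = (1/\<alpha>) * H powr (\<alpha>-1) * S + ((\<alpha>-1)/\<alpha>)" using Hp by simp
  finally have "1 \<le> (1/\<alpha>) * H powr (\<alpha>-1) * S + ((\<alpha>-1)/\<alpha>)" using Qs by simp
  then have "1 \<le> H powr (\<alpha>-1) * S" using a1 by (simp add: field_simps)
  then have "1 / H powr (\<alpha>-1) \<le> S" using Hp by (simp add: field_simps)
  moreover have "1 / H powr (\<alpha>-1) = H powr (1-\<alpha>)"
    using powr_minus_divide[of H "\<alpha>-1"] by simp
  ultimately show ?thesis unfolding S_def H_def by simp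
qed

definition cc :: "real \<Rightarrow> ('x::finite \<Rightarrow> 'y \<Rightarrow> real) \<Rightarrow> ('x \<Rightarrow> real) \<Rightarrow> 'y \<Rightarrow> real" where
  "cc \<alpha> W P y = (\<Sum>x\<in>UNIV. P x * W x y powr (1-\<alpha>))"

lemma sum_pair_UNIV: "(\<Sum>z\<in>(UNIV::('a::finite \<times> 'b::finite) set). f z) = (\<Sum>a\<in>UNIV. \<Sum>b\<in>UNIV. f (a,b))"
proof -
  have "(\<Sum>a\<in>UNIV. \<Sum>b\<in>UNIV. f (a,b)) = (\<Sum>(a,b)\<in>UNIV \<times> UNIV. f (a,b))"
    by (rule sum.cartesian_product)
  also have "\<dots> = (\<Sum>z\<in>UNIV. f z)" by (simp only: case_prod_eta UNIV_Times_UNIV)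
  finally show ?thesis by (rule sym)
qed

lemma term_eq: fixes p q w a :: real shows "0 \<le> p \<Longrightarrow> (p * q) powr a * (p * w) powr (1-a) = q powr a * (p * w powr (1-a))"
proof -
  assume "0 \<le> p"
  have "p powr a * p powr (1-a) = p powr (a + (1-a))" by (simp only: powr_add)
  also have "\<dots> = p" using \<open>0 \<le> p\<close> by simp
  finally have "p powr a * p powr (1-a) = p" .
  then have "(p * q) powr a * (p * w) powr (1-a) = (p powr a * p powr (1-a)) * q powr a * w powr (1-a)"
    by (simp add: powr_mult algebra_simps)
  also have "\<dots> = q powr a * (p * w powr (1-a))" using \<open>p powr a * p powr (1-a) = p\<close> by simp
  finally show ?thesis .
qed

lemma renyi_eq:
  fixes P :: "'x::finite \<Rightarrow> real" and Q :: "'y::finite \<Rightarrow> real" and W :: "'x \<Rightarrow> 'y \<Rightarrow> real"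
  assumes Pn: "\<And>x. P x \<ge> 0" and Qn: "\<And>y. Q y \<ge> 0" and Wn: "\<And>x y. W x y \<ge> 0"
  shows "renyi_div \<alpha> (\<lambda>(x,y). P x * Q y) (\<lambda>(x,y). P x * W x y) =
    (if \<alpha> > 1 \<and> \<not>(\<forall>y. Q y > 0 \<longrightarrow> (\<forall>x. P x > 0 \<longrightarrow> W x y > 0)) then \<infinity>
     else (if (\<Sum>y\<in>UNIV. Q y powr \<alpha> * cc \<alpha> W P y) = 0 then \<infinity>
           else ereal (ln (\<Sum>y\<in>UNIV. Q y powr \<alpha> * cc \<alpha> W P y) / (\<alpha>-1))))"
proof -
  have pos: "\<And>a b::real. 0 \<le> a \<Longrightarrow> 0 \<le> b \<Longrightarrow> (0 < a * b) = (0 < a \<and> 0 < b)"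
    by (auto simp: zero_less_mult_iff)
  have cond: "(\<forall>z. (case z of (x,y) \<Rightarrow> P x * Q y) > 0 \<longrightarrow> (case z of (x,y) \<Rightarrow> P x * W x y) > 0)
      = (\<forall>y. Q y > 0 \<longrightarrow> (\<forall>x. P x > 0 \<longrightarrow> W x y > 0))"
  proof
    assume H: "\<forall>z. (case z of (x,y) \<Rightarrow> P x * Q y) > 0 \<longrightarrow> (case z of (x,y) \<Rightarrow> P x * W x y) > 0"
    show "\<forall>y. Q y > 0 \<longrightarrow> (\<forall>x. P x > 0 \<longrightarrow> W x y > 0)"
    proof (intro allI impI)
      fix y x assume q: "Q y > 0" and p: "P x > 0"
      then have "P x * Q y > 0" by simp
      then have "P x * W x y > 0" using H[rule_format, of "(x,y)"] by simp
      then show "W x y > 0" using Wn[of x y] by (cases "W x y = 0") auto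
    qed
  next
    assume H: "\<forall>y. Q y > 0 \<longrightarrow> (\<forall>x. P x > 0 \<longrightarrow> W x y > 0)"
    show "\<forall>z. (case z of (x,y) \<Rightarrow> P x * Q y) > 0 \<longrightarrow> (case z of (x,y) \<Rightarrow> P x * W x y) > 0"
    proof (intro allI impI)
      fix z assume zz: "(case z of (x,y) \<Rightarrow> P x * Q y) > 0"
      obtain x y where z: "z = (x,y)" by (cases z)
      have "P x * Q y > 0" using zz z by simp
      then have p: "P x > 0" and q: "Q y > 0" using pos[OF Pn[of x] Qn[of y]] by auto
      then have "W x y > 0" using H by blast
      then show "(case z of (x,y) \<Rightarrow> P x * W x y) > 0" using z p by simp
    qed
  qed
  let ?f = "\<lambda>z. (case z of (x,y) \<Rightarrow> P x * Q y) powr \<alpha> * (case z of (x,y) \<Rightarrow> P x * W x y) powr (1-\<alpha>)"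
  have "(\<Sum>z\<in>{z. (case z of (x,y) \<Rightarrow> P x * Q y) > 0}. ?f z) = (\<Sum>z\<in>UNIV. ?f z)"
  proof (rule sum.mono_neutral_left)
    show "\<forall>z\<in>UNIV - {z. (case z of (x,y) \<Rightarrow> P x * Q y) > 0}. ?f z = 0"
    proof
      fix z assume "z \<in> UNIV - {z. (case z of (x,y) \<Rightarrow> P x * Q y) > 0}"
      then obtain x y where z: "z = (x,y)" and "\<not> P x * Q y > 0" by (cases z) auto
      then have "P x * Q y = 0" using Pn[of x] Qn[of y] by (simp add: less_le)
      then show "?f z = 0" using z by simp
    qed
  qed auto
  also have "\<dots> = (\<Sum>x\<in>UNIV. \<Sum>y\<in>UNIV. ?f (x,y))"
    by (rule sum_pair_UNIV)
  also have "\<dots> = (\<Sum>x\<in>UNIV. \<Sum>y\<in>UNIV. Q y powr \<alpha> * (P x * W x y powr (1-\<alpha>)))"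
    by (intro sum.cong refl) (simp add: term_eq Pn)
  also have "\<dots> = (\<Sum>y\<in>UNIV. Q y powr \<alpha> * cc \<alpha> W P y)"
    by (subst sum.swap) (simp add: cc_def sum_distrib_left)
  finally have s: "(\<Sum>z\<in>{z. (case z of (x,y) \<Rightarrow> P x * Q y) > 0}. ?f z) = (\<Sum>y\<in>UNIV. Q y powr \<alpha> * cc \<alpha> W P y)" .
  show ?thesis unfolding renyi_div_def Let_def
    by (simp only: cond s)
qed

definition GG :: "real \<Rightarrow> ('x::finite \<Rightarrow> 'y::finite \<Rightarrow> real) \<Rightarrow> ('x \<Rightarrow> real) \<Rightarrow> 'y set" where
  "GG \<alpha> W P = {y. \<alpha> < 1 \<or> (\<forall>x. P x > 0 \<longrightarrow> W x y > 0)}"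

definition hh :: "real \<Rightarrow> ('x::finite \<Rightarrow> 'y::finite \<Rightarrow> real) \<Rightarrow> ('x \<Rightarrow> real) \<Rightarrow> real" where
  "hh \<alpha> W P = (\<Sum>y\<in>GG \<alpha> W P. cc \<alpha> W P y powr (1/(1-\<alpha>)))"

definition Phi :: "real \<Rightarrow> ereal" where
  "Phi t = (if t = 0 then \<infinity> else ereal (- ln t))"

lemma INF_eq_val:
  fixes f :: "'a \<Rightarrow> ereal"
  assumes "\<And>Q. Q \<in> A \<Longrightarrow> v \<le> f Q" "Qs \<in> A" "f Qs = v"
  shows "(INF Q\<in>A. f Q) = v"
  using assms by (metis INF_greatest INF_lower antisym)

lemma dist_pos: "is_dist (P::'x::finite \<Rightarrow> real) \<Longrightarrow> \<exists>x. P x > 0"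
proof (rule ccontr)
  assume d: "is_dist P" and "\<not> (\<exists>x. P x > 0)"
  then have "\<And>x. P x = 0" unfolding is_dist_def by (meson not_less order_antisym)
  then show False using d unfolding is_dist_def by simp
qed

lemma hh_nonneg: "hh \<alpha> W P \<ge> 0"
  unfolding hh_def by (simp add: sum_nonneg)

lemma ln_bound:
  fixes s H \<alpha> :: real
  assumes "0 < s" "0 < H" "\<alpha> \<noteq> 1"
    and "(\<alpha> < 1 \<and> s \<le> H powr (1-\<alpha>)) \<or> (\<alpha> > 1 \<and> H powr (1-\<alpha>) \<le> s)"
  shows "- ln H \<le> ln s / (\<alpha> - 1)"
proof -
  have l: "ln (H powr (1-\<alpha>)) = (1-\<alpha>) * ln H" using assms by simp
  show ?thesis
  proof (cases "\<alpha> < 1")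
    case True
    have "ln s \<le> ln (H powr (1-\<alpha>))" using assms True by (subst ln_le_cancel_iff) auto
    then have "ln s \<le> (1-\<alpha>) * ln H" using l by simp
    then show ?thesis using True by (simp add: field_simps)
  next
    case False
    then have "\<alpha> > 1" using assms by simp
    have "ln (H powr (1-\<alpha>)) \<le> ln s" using assms \<open>\<alpha> > 1\<close> by (subst ln_le_cancel_iff) auto
    then have "(1-\<alpha>) * ln H \<le> ln s" using l by simp
    then show ?thesis using \<open>\<alpha> > 1\<close> by (simp add: field_simps)
  qed
qed

lemma ln_eq: fixes H \<alpha> :: real shows "0 < H \<Longrightarrow> \<alpha> \<noteq> 1 \<Longrightarrow> ln (H powr (1-\<alpha>)) / (\<alpha> - 1) = - ln H"
proof -
  assume "0 < H" "\<alpha> \<noteq> 1"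
  then have "ln (H powr (1-\<alpha>)) = (1-\<alpha>) * ln H" by simp
  then show ?thesis using \<open>\<alpha> \<noteq> 1\<close> by (simp add: field_simps)
qed

lemma V_eq:
  fixes P :: "'x::finite \<Rightarrow> real" and W :: "'x \<Rightarrow> 'y::finite \<Rightarrow> real"
  assumes a0: "0 < \<alpha>" and a1: "\<alpha> \<noteq> 1" and dP: "is_dist P" and cW: "is_channel W"
  shows "(INF Q\<in>{Q. is_dist Q}. renyi_div \<alpha> (\<lambda>(x,y). P x * Q y) (\<lambda>(x,y). P x * W x y)) = Phi (hh \<alpha> W P)"
proof -
  have Pn: "\<And>x. P x \<ge> 0" using dP unfolding is_dist_def by auto
  have Wn: "\<And>x y. W x y \<ge> 0" using cW unfolding is_channel_def is_dist_def by auto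
  have cn: "\<And>y. cc \<alpha> W P y \<ge> 0" unfolding cc_def using Pn by (simp add: sum_nonneg)
  obtain x0 where x0: "P x0 > 0" using dist_pos[OF dP] by auto
  define q where "q = 1/(1-\<alpha>)"
  have re: "renyi_div \<alpha> (\<lambda>(x,y). P x * Q y) (\<lambda>(x,y). P x * W x y) =
    (if \<alpha> > 1 \<and> \<not>(\<forall>y. Q y > 0 \<longrightarrow> (\<forall>x. P x > 0 \<longrightarrow> W x y > 0)) then \<infinity>
     else (if (\<Sum>y\<in>UNIV. Q y powr \<alpha> * cc \<alpha> W P y) = 0 then \<infinity>
           else ereal (ln (\<Sum>y\<in>UNIV. Q y powr \<alpha> * cc \<alpha> W P y) / (\<alpha>-1))))" if "is_dist Q" for Q
    by (rule renyi_eq) (use Pn Wn that in \<open>auto simp: is_dist_def\<close>)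
  show ?thesis
  proof (cases "\<alpha> < 1")
    case True
    have G: "GG \<alpha> W P = UNIV" using True unfolding GG_def by auto
    define H where "H = hh \<alpha> W P"
    have Hd: "H = (\<Sum>y\<in>UNIV. cc \<alpha> W P y powr q)" unfolding H_def hh_def G q_def ..
    obtain y0 where y0: "W x0 y0 > 0" using dist_pos[of "W x0"] cW unfolding is_channel_def by auto
    have "cc \<alpha> W P y0 \<ge> P x0 * W x0 y0 powr (1-\<alpha>)"
      unfolding cc_def by (rule member_le_sum) (use Pn Wn in auto)
    moreover have "P x0 * W x0 y0 powr (1-\<alpha>) > 0" using x0 y0 by simp
    ultimately have "cc \<alpha> W P y0 > 0" by linarith
    then have "cc \<alpha> W P y0 powr q > 0" by simp
    moreover have "cc \<alpha> W P y0 powr q \<le> H" unfolding Hd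
      by (rule member_le_sum) auto
    ultimately have Hp: "H > 0" by linarith
    have lb: "ereal (- ln H) \<le> renyi_div \<alpha> (\<lambda>(x,y). P x * Q y) (\<lambda>(x,y). P x * W x y)"
      if dQ: "is_dist Q" for Q
    proof -
      let ?s = "(\<Sum>y\<in>UNIV. Q y powr \<alpha> * cc \<alpha> W P y)"
      have "?s \<le> H powr (1-\<alpha>)" unfolding Hd q_def
        by (rule holderA) (use a0 True dQ cn in \<open>auto simp: is_dist_def\<close>)
      moreover have "?s \<ge> 0" using cn by (simp add: sum_nonneg)
      ultimately show ?thesis unfolding re[OF dQ] using True Hp ln_bound[of ?s H \<alpha>] a1
        by (auto simp: less_le)
    qed
    define Qs where "Qs = (\<lambda>y. cc \<alpha> W P y powr q / H)"
    have dQs: "is_dist Qs" unfolding is_dist_def Qs_def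
      using Hp by (simp add: sum_divide_distrib[symmetric] Hd[symmetric])
    have tQ: "Qs y powr \<alpha> * cc \<alpha> W P y = cc \<alpha> W P y powr q / H powr \<alpha>" for y
    proof -
      have "cc \<alpha> W P y powr (q*\<alpha>) * cc \<alpha> W P y = cc \<alpha> W P y powr q"
      proof (cases "cc \<alpha> W P y = 0")
        case False
        have "q*\<alpha> + 1 = q" unfolding q_def using True by (simp add: field_simps)
        then have "cc \<alpha> W P y powr (q*\<alpha>) * cc \<alpha> W P y powr 1 = cc \<alpha> W P y powr q"
          by (metis powr_add)
        then show ?thesis using cn[of y] by simp
      qed simp
      then show ?thesis unfolding Qs_def by (simp add: powr_divide powr_powr)
    qed
    have sQs: "(\<Sum>y\<in>UNIV. Qs y powr \<alpha> * cc \<alpha> W P y) = H powr (1-\<alpha>)"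
    proof -
      have "(\<Sum>y\<in>UNIV. Qs y powr \<alpha> * cc \<alpha> W P y) = H / H powr \<alpha>"
        unfolding tQ Hd by (simp add: sum_divide_distrib)
      also have "\<dots> = H powr (1-\<alpha>)" using Hp by (simp add: powr_diff)
      finally show ?thesis .
    qed
    have "renyi_div \<alpha> (\<lambda>(x,y). P x * Qs y) (\<lambda>(x,y). P x * W x y) = ereal (- ln H)"
      unfolding re[OF dQs] sQs using True Hp a1 ln_eq[of H \<alpha>] by simp
    then have "(INF Q\<in>{Q. is_dist Q}. renyi_div \<alpha> (\<lambda>(x,y). P x * Q y) (\<lambda>(x,y). P x * W x y)) = ereal (- ln H)"
      by (intro INF_eq_val[where Qs = Qs]) (use lb dQs in auto)
    then show ?thesis unfolding Phi_def H_def[symmetric] using Hp by simp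
  next
    case False
    then have a1': "\<alpha> > 1" using a1 by simp
    define G where "G = GG \<alpha> W P"
    have Gd: "G = {y. \<forall>x. P x > 0 \<longrightarrow> W x y > 0}" unfolding G_def GG_def using a1' by auto
    show ?thesis
    proof (cases "G = {}")
      case True
      have h0: "hh \<alpha> W P = 0" unfolding hh_def G_def[symmetric] True by simp
      have "renyi_div \<alpha> (\<lambda>(x,y). P x * Q y) (\<lambda>(x,y). P x * W x y) = \<infinity>" if dQ: "is_dist Q" for Q
      proof -
        obtain y where "Q y > 0" using dist_pos[OF dQ] by auto
        moreover have "y \<notin> G" using True by auto
        ultimately show ?thesis unfolding re[OF dQ] using a1' Gd by auto
      qed
      then show ?thesis unfolding h0 Phi_def by (simp add: top_ereal_def[symmetric])
    next
      case False
      have cp: "cc \<alpha> W P y > 0" if "y \<in> G" for y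
      proof -
        have "cc \<alpha> W P y \<ge> P x0 * W x0 y powr (1-\<alpha>)"
          unfolding cc_def by (rule member_le_sum) (use Pn Wn in auto)
        moreover have "P x0 * W x0 y powr (1-\<alpha>) > 0" using x0 that Gd by auto
        ultimately show ?thesis by linarith
      qed
      define H where "H = hh \<alpha> W P"
      have Hd: "H = (\<Sum>y\<in>G. cc \<alpha> W P y powr q)" unfolding H_def hh_def G_def q_def ..
      obtain y0 where y0: "y0 \<in> G" using False by auto
      have "cc \<alpha> W P y0 powr q > 0" using cp[OF y0] by simp
      moreover have "cc \<alpha> W P y0 powr q \<le> H" unfolding Hd
        by (rule member_le_sum) (use y0 in auto)
      ultimately have Hp: "H > 0" by linarith
      have lb: "ereal (- ln H) \<le> renyi_div \<alpha> (\<lambda>(x,y). P x * Q y) (\<lambda>(x,y). P x * W x y)"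
        if dQ: "is_dist Q" for Q
      proof (cases "\<forall>y. Q y > 0 \<longrightarrow> y \<in> G")
        case False
        then show ?thesis unfolding re[OF dQ] using a1' Gd by auto
      next
        case True
        have Qn: "\<And>y. Q y \<ge> 0" using dQ by (auto simp: is_dist_def)
        have Q0: "Q y = 0" if "y \<notin> G" for y using True that Qn[of y] by (auto simp: less_le)
        let ?s = "(\<Sum>y\<in>UNIV. Q y powr \<alpha> * cc \<alpha> W P y)"
        have sG: "?s = (\<Sum>y\<in>G. Q y powr \<alpha> * cc \<alpha> W P y)"
          by (rule sum.mono_neutral_right) (use Q0 in auto)
        have QG: "(\<Sum>y\<in>G. Q y) = 1"
        proof -
          have "(\<Sum>y\<in>G. Q y) = (\<Sum>y\<in>UNIV. Q y)"
            by (rule sum.mono_neutral_left) (use Q0 in auto)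
          then show ?thesis using dQ by (simp add: is_dist_def)
        qed
        have s1: "?s \<ge> H powr (1-\<alpha>)" unfolding sG Hd q_def
          by (rule holderB) (use a1' Qn QG cp in auto)
        moreover have "H powr (1-\<alpha>) > 0" using Hp by simp
        ultimately have s2: "?s > 0" by linarith
        show ?thesis unfolding re[OF dQ] using ln_bound[of ?s H \<alpha>, OF s2 Hp a1] s1 s2 a1' True Gd
          by auto
      qed
      define Qs where "Qs = (\<lambda>y. if y \<in> G then cc \<alpha> W P y powr q / H else 0)"
      have sQ1: "(\<Sum>y\<in>UNIV. Qs y) = (\<Sum>y\<in>G. cc \<alpha> W P y powr q / H)"
        unfolding Qs_def by (simp add: sum.If_cases)
      have dQs: "is_dist Qs" unfolding is_dist_def
        using Hp sQ1 by (auto simp: Qs_def sum_divide_distrib[symmetric] Hd[symmetric])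
      have tQ: "Qs y powr \<alpha> * cc \<alpha> W P y = cc \<alpha> W P y powr q / H powr \<alpha>" if yG: "y \<in> G" for y
      proof -
        have "q*\<alpha> + 1 = q" unfolding q_def using a1' by (simp add: field_simps)
        then have "cc \<alpha> W P y powr (q*\<alpha>) * cc \<alpha> W P y powr 1 = cc \<alpha> W P y powr q"
          by (metis powr_add)
        then have "cc \<alpha> W P y powr (q*\<alpha>) * cc \<alpha> W P y = cc \<alpha> W P y powr q" using cn[of y] by simp
        then show ?thesis unfolding Qs_def using yG by (simp add: powr_divide powr_powr)
      qed
      have sQs: "(\<Sum>y\<in>UNIV. Qs y powr \<alpha> * cc \<alpha> W P y) = H powr (1-\<alpha>)"
      proof -
        have "(\<Sum>y\<in>UNIV. Qs y powr \<alpha> * cc \<alpha> W P y) = (\<Sum>y\<in>G. Qs y powr \<alpha> * cc \<alpha> W P y)"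
          by (rule sum.mono_neutral_right) (auto simp: Qs_def)
        also have "\<dots> = (\<Sum>y\<in>G. cc \<alpha> W P y powr q / H powr \<alpha>)"
          by (rule sum.cong) (auto simp: tQ)
        also have "\<dots> = H / H powr \<alpha>"
          unfolding Hd by (simp add: sum_divide_distrib)
        also have "\<dots> = H powr (1-\<alpha>)" using Hp by (simp add: powr_diff)
        finally show ?thesis .
      qed
      have supp: "\<forall>y. Qs y > 0 \<longrightarrow> (\<forall>x. P x > 0 \<longrightarrow> W x y > 0)"
        using Gd by (auto simp: Qs_def split: if_splits)
      have "renyi_div \<alpha> (\<lambda>(x,y). P x * Qs y) (\<lambda>(x,y). P x * W x y) = ereal (- ln H)"
        unfolding re[OF dQs] sQs using supp Hp a1 ln_eq[of H \<alpha>] by simp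
      then have "(INF Q\<in>{Q. is_dist Q}. renyi_div \<alpha> (\<lambda>(x,y). P x * Q y) (\<lambda>(x,y). P x * W x y)) = ereal (- ln H)"
        by (intro INF_eq_val[where Qs = Qs]) (use lb dQs in auto)
      then show ?thesis unfolding Phi_def H_def[symmetric] using Hp by simp
    qed
  qed
qed

lemma cc_prod:
  fixes P1 :: "'x1::finite \<Rightarrow> real" and P2 :: "'x2::finite \<Rightarrow> real"
    and W1 :: "'x1 \<Rightarrow> 'y1::finite \<Rightarrow> real" and W2 :: "'x2 \<Rightarrow> 'y2::finite \<Rightarrow> real"
  shows "cc \<alpha> (prod_channel W1 W2) (\<lambda>(x1,x2). P1 x1 * P2 x2) (y1,y2) = cc \<alpha> W1 P1 y1 * cc \<alpha> W2 P2 y2"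
  unfolding cc_def prod_channel_def sum_pair_UNIV
  by (simp add: powr_mult sum_product algebra_simps)

lemma GG_prod:
  fixes P1 :: "'x1::finite \<Rightarrow> real" and P2 :: "'x2::finite \<Rightarrow> real"
    and W1 :: "'x1 \<Rightarrow> 'y1::finite \<Rightarrow> real" and W2 :: "'x2 \<Rightarrow> 'y2::finite \<Rightarrow> real"
  assumes d1: "is_dist P1" and d2: "is_dist P2" and c1: "is_channel W1" and c2: "is_channel W2"
  shows "GG \<alpha> (prod_channel W1 W2) (\<lambda>(x1,x2). P1 x1 * P2 x2) = GG \<alpha> W1 P1 \<times> GG \<alpha> W2 P2"
proof (cases "\<alpha> < 1")
  case True then show ?thesis unfolding GG_def by auto
next
  case False
  have P1n: "\<And>x. P1 x \<ge> 0" using d1 unfolding is_dist_def by auto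
  have P2n: "\<And>x. P2 x \<ge> 0" using d2 unfolding is_dist_def by auto
  have W1n: "\<And>x y. W1 x y \<ge> 0" using c1 unfolding is_channel_def is_dist_def by auto
  have W2n: "\<And>x y. W2 x y \<ge> 0" using c2 unfolding is_channel_def is_dist_def by auto
  obtain a1 where a1: "P1 a1 > 0" using dist_pos[OF d1] by auto
  obtain a2 where a2: "P2 a2 > 0" using dist_pos[OF d2] by auto
  have pos: "\<And>a b::real. 0 \<le> a \<Longrightarrow> 0 \<le> b \<Longrightarrow> (0 < a * b) = (0 < a \<and> 0 < b)"
    by (auto simp: zero_less_mult_iff)
  show ?thesis
  proof (rule set_eqI, clarify)
    fix y1 y2
    have "(y1,y2) \<in> GG \<alpha> (prod_channel W1 W2) (\<lambda>(x1,x2). P1 x1 * P2 x2) \<longleftrightarrow>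
      (\<forall>x1 x2. P1 x1 > 0 \<and> P2 x2 > 0 \<longrightarrow> W1 x1 y1 > 0 \<and> W2 x2 y2 > 0)"
      unfolding GG_def prod_channel_def using False P1n P2n W1n W2n pos by auto
    also have "\<dots> \<longleftrightarrow> y1 \<in> GG \<alpha> W1 P1 \<and> y2 \<in> GG \<alpha> W2 P2"
      unfolding GG_def using False a1 a2 by blast
    finally show "(y1,y2) \<in> GG \<alpha> (prod_channel W1 W2) (\<lambda>(x1,x2). P1 x1 * P2 x2) \<longleftrightarrow>
      (y1,y2) \<in> GG \<alpha> W1 P1 \<times> GG \<alpha> W2 P2" by simp
  qed
qed

lemma hh_prod:
  fixes P1 :: "'x1::finite \<Rightarrow> real" and P2 :: "'x2::finite \<Rightarrow> real"
    and W1 :: "'x1 \<Rightarrow> 'y1::finite \<Rightarrow> real" and W2 :: "'x2 \<Rightarrow> 'y2::finite \<Rightarrow> real"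
  assumes d1: "is_dist P1" and d2: "is_dist P2" and c1: "is_channel W1" and c2: "is_channel W2"
  shows "hh \<alpha> (prod_channel W1 W2) (\<lambda>(x1,x2). P1 x1 * P2 x2) = hh \<alpha> W1 P1 * hh \<alpha> W2 P2"
proof -
  have e: "\<And>f A B. (\<Sum>y\<in>A \<times> B. f y) = (\<Sum>y1\<in>A. \<Sum>y2\<in>B. f (y1,y2))"
    by (simp add: sum.cartesian_product)
  show ?thesis unfolding hh_def GG_prod[OF assms] e
    by (simp add: cc_prod powr_mult sum_product)
qed

lemma dist_prod:
  fixes P1 :: "'x1::finite \<Rightarrow> real" and P2 :: "'x2::finite \<Rightarrow> real"
  assumes d1: "is_dist P1" and d2: "is_dist P2"
  shows "is_dist (\<lambda>(x1,x2). P1 x1 * P2 x2)"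
  using assms unfolding is_dist_def sum_pair_UNIV
  by (simp add: sum_distrib_left[symmetric] sum_distrib_right[symmetric])

lemma hh_lower:
  fixes P12 :: "('x1::finite \<times> 'x2::finite) \<Rightarrow> real"
    and W1 :: "'x1 \<Rightarrow> 'y1::finite \<Rightarrow> real" and W2 :: "'x2 \<Rightarrow> 'y2::finite \<Rightarrow> real"
  assumes dP: "is_dist P12" and c1: "is_channel W1" and c2: "is_channel W2"
    and L0: "L \<ge> 0" and Lb: "\<And>Q. is_dist Q \<Longrightarrow> L \<le> hh \<alpha> W2 Q"
  shows "hh \<alpha> W1 (\<lambda>x1. \<Sum>x2\<in>UNIV. P12 (x1,x2)) * L \<le> hh \<alpha> (prod_channel W1 W2) P12"
proof -
  define P1 where "P1 = (\<lambda>x1. \<Sum>x2\<in>UNIV. P12 (x1,x2))"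
  define r where "r = 1/(1-\<alpha>)"
  define G12 where "G12 = GG \<alpha> (prod_channel W1 W2) P12"
  define c12 where "c12 = cc \<alpha> (prod_channel W1 W2) P12"
  define sl where "sl = (\<lambda>y1. {y2. (y1,y2) \<in> G12})"
  have Pn: "\<And>z. P12 z \<ge> 0" using dP unfolding is_dist_def by auto
  have W1n: "\<And>x y. W1 x y \<ge> 0" using c1 unfolding is_channel_def is_dist_def by auto
  have W2n: "\<And>x y. W2 x y \<ge> 0" using c2 unfolding is_channel_def is_dist_def by auto
  have P1n: "\<And>x. P1 x \<ge> 0" unfolding P1_def using Pn by (simp add: sum_nonneg)
  have P1ge: "\<And>x1 x2. P12 (x1,x2) \<le> P1 x1" unfolding P1_def
    by (rule member_le_sum) (use Pn in auto)
  have c1n: "\<And>y. cc \<alpha> W1 P1 y \<ge> 0" unfolding cc_def using P1n by (simp add: sum_nonneg)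
  have G12eq: "G12 = Sigma UNIV sl"
  proof (rule set_eqI)
    fix z :: "'y1 \<times> 'y2" show "z \<in> G12 \<longleftrightarrow> z \<in> Sigma UNIV sl" by (cases z) (simp add: sl_def)
  qed
  define g where "g = (\<lambda>y1. \<Sum>y2\<in>sl y1. c12 (y1,y2) powr r)"
  have "hh \<alpha> (prod_channel W1 W2) P12 = (\<Sum>z\<in>G12. c12 z powr r)"
    unfolding hh_def G12_def c12_def r_def ..
  also have "\<dots> = (\<Sum>y1\<in>UNIV. \<Sum>y2\<in>sl y1. c12 (y1,y2) powr r)"
    unfolding G12eq using sum.Sigma[of UNIV sl "\<lambda>x y. c12 (x,y) powr r"]
    by (simp add: case_prod_eta)
  finally have hg: "hh \<alpha> (prod_channel W1 W2) P12 = sum g UNIV" unfolding g_def .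
  have gn: "\<And>y1. 0 \<le> g y1" unfolding g_def by (simp add: sum_nonneg)
  have "sum g (GG \<alpha> W1 P1) \<le> sum g UNIV"
    by (rule sum_mono2) (use gn in auto)
  then have "(\<Sum>y1\<in>GG \<alpha> W1 P1. \<Sum>y2\<in>sl y1. c12 (y1,y2) powr r) \<le> hh \<alpha> (prod_channel W1 W2) P12"
    unfolding hg g_def .
  moreover have "(\<Sum>y1\<in>GG \<alpha> W1 P1. \<Sum>y2\<in>sl y1. c12 (y1,y2) powr r) \<ge> (\<Sum>y1\<in>GG \<alpha> W1 P1. cc \<alpha> W1 P1 y1 powr r * L)"
  proof (rule sum_mono)
    fix y1 assume y1G: "y1 \<in> GG \<alpha> W1 P1"
    show "cc \<alpha> W1 P1 y1 powr r * L \<le> (\<Sum>y2\<in>sl y1. c12 (y1,y2) powr r)"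
    proof (cases "cc \<alpha> W1 P1 y1 = 0")
      case True then show ?thesis by (simp add: sum_nonneg)
    next
      case False
      define C where "C = cc \<alpha> W1 P1 y1"
      have Cp: "C > 0" using False c1n[of y1] unfolding C_def by simp
      define R where "R = (\<lambda>x2. \<Sum>x1\<in>UNIV. P12 (x1,x2) * W1 x1 y1 powr (1-\<alpha>))"
      have Rn: "\<And>x2. R x2 \<ge> 0" unfolding R_def using Pn by (simp add: sum_nonneg)
      have sR: "(\<Sum>x2\<in>UNIV. R x2) = C"
        unfolding R_def C_def cc_def P1_def
        by (subst sum.swap) (simp only: sum_distrib_right)
      define Pb where "Pb = (\<lambda>x2. R x2 / C)"
      have dPb: "is_dist Pb" unfolding is_dist_def Pb_def
        using Rn Cp sR by (simp add: sum_divide_distrib[symmetric])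
      have c12eq: "c12 (y1,y2) = C * cc \<alpha> W2 Pb y2" for y2
      proof -
        have "c12 (y1,y2) = (\<Sum>x1\<in>UNIV. \<Sum>x2\<in>UNIV. P12 (x1,x2) * (W1 x1 y1 * W2 x2 y2) powr (1-\<alpha>))"
          unfolding c12_def cc_def sum_pair_UNIV prod_channel_def by simp
        also have "\<dots> = (\<Sum>x2\<in>UNIV. \<Sum>x1\<in>UNIV. P12 (x1,x2) * W1 x1 y1 powr (1-\<alpha>) * W2 x2 y2 powr (1-\<alpha>))"
          by (subst sum.swap) (simp only: powr_mult mult.assoc)
        also have "\<dots> = (\<Sum>x2\<in>UNIV. R x2 * W2 x2 y2 powr (1-\<alpha>))"
          unfolding R_def by (simp only: sum_distrib_right)
        also have "\<dots> = (\<Sum>x2\<in>UNIV. C * (R x2 / C * W2 x2 y2 powr (1-\<alpha>)))"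
          using Cp by (intro sum.cong) auto
        also have "\<dots> = C * cc \<alpha> W2 Pb y2"
          unfolding cc_def Pb_def by (simp only: sum_distrib_left)
        finally show ?thesis .
      qed
      have sleq: "sl y1 = GG \<alpha> W2 Pb"
      proof (cases "\<alpha> < 1")
        case True then show ?thesis unfolding sl_def G12_def GG_def by auto
      next
        case False
        have W1p: "W1 x1 y1 > 0" if "P12 (x1,x2) > 0" for x1 x2
          using y1G False P1ge[of x1 x2] that unfolding GG_def by auto
        have Pbp: "Pb x2 > 0 \<longleftrightarrow> (\<exists>x1. P12 (x1,x2) > 0)" for x2
        proof
          assume "Pb x2 > 0"
          then have "R x2 \<noteq> 0" unfolding Pb_def by auto
          then obtain x1 where "P12 (x1,x2) * W1 x1 y1 powr (1-\<alpha>) \<noteq> 0"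
            unfolding R_def by (auto elim: sum.not_neutral_contains_not_neutral)
          then have "P12 (x1,x2) \<noteq> 0" by auto
          then show "\<exists>x1. P12 (x1,x2) > 0" using Pn[of "(x1,x2)"] by (auto simp: less_le)
        next
          assume "\<exists>x1. P12 (x1,x2) > 0"
          then obtain x1 where x1: "P12 (x1,x2) > 0" by auto
          have "0 < P12 (x1,x2) * W1 x1 y1 powr (1-\<alpha>)" using x1 W1p[OF x1] by simp
          also have "\<dots> \<le> R x2" unfolding R_def
            by (rule member_le_sum) (use Pn in \<open>auto intro!: mult_nonneg_nonneg\<close>)
          finally show "Pb x2 > 0" unfolding Pb_def using Cp by simp
        qed
        have pos: "\<And>a b::real. 0 \<le> a \<Longrightarrow> 0 \<le> b \<Longrightarrow> (0 < a * b) = (0 < a \<and> 0 < b)"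
          by (auto simp: zero_less_mult_iff)
        show ?thesis
        proof (rule set_eqI)
          fix y2
          have "y2 \<in> sl y1 \<longleftrightarrow> (\<forall>x1 x2. P12 (x1,x2) > 0 \<longrightarrow> W1 x1 y1 * W2 x2 y2 > 0)"
            by (simp add: sl_def G12_def GG_def False prod_channel_def)
          also have "\<dots> \<longleftrightarrow> (\<forall>x2. (\<exists>x1. P12 (x1,x2) > 0) \<longrightarrow> W2 x2 y2 > 0)"
          proof
            assume H: "\<forall>x1 x2. P12 (x1,x2) > 0 \<longrightarrow> W1 x1 y1 * W2 x2 y2 > 0"
            show "\<forall>x2. (\<exists>x1. P12 (x1,x2) > 0) \<longrightarrow> W2 x2 y2 > 0"
            proof (intro allI impI)
              fix x2 assume "\<exists>x1. P12 (x1,x2) > 0"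
              then obtain x1 where "P12 (x1,x2) > 0" by auto
              then have "W1 x1 y1 * W2 x2 y2 > 0" using H by auto
              then show "W2 x2 y2 > 0" using W2n[of x2 y2] by (cases "W2 x2 y2 = 0") auto
            qed
          next
            assume H: "\<forall>x2. (\<exists>x1. P12 (x1,x2) > 0) \<longrightarrow> W2 x2 y2 > 0"
            show "\<forall>x1 x2. P12 (x1,x2) > 0 \<longrightarrow> W1 x1 y1 * W2 x2 y2 > 0"
            proof (intro allI impI)
              fix x1 x2 assume p: "P12 (x1,x2) > 0"
              have "W1 x1 y1 > 0" using W1p[OF p] .
              moreover have "W2 x2 y2 > 0" using H p by blast
              ultimately show "W1 x1 y1 * W2 x2 y2 > 0" by simp
            qed
          qed
          also have "\<dots> \<longleftrightarrow> y2 \<in> GG \<alpha> W2 Pb"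
            unfolding GG_def using False Pbp by auto
          finally show "y2 \<in> sl y1 \<longleftrightarrow> y2 \<in> GG \<alpha> W2 Pb" .
        qed
      qed
      have "(\<Sum>y2\<in>sl y1. c12 (y1,y2) powr r) = C powr r * hh \<alpha> W2 Pb"
        unfolding sleq hh_def c12eq r_def by (simp add: powr_mult sum_distrib_left)
      moreover have "C powr r * L \<le> C powr r * hh \<alpha> W2 Pb"
        using Lb[OF dPb] by (simp add: mult_left_mono)
      ultimately show ?thesis unfolding C_def by simp
    qed
  qed
  moreover have "(\<Sum>y1\<in>GG \<alpha> W1 P1. cc \<alpha> W1 P1 y1 powr r * L) = hh \<alpha> W1 P1 * L"
    unfolding hh_def r_def by (simp add: sum_distrib_right)
  ultimately show ?thesis unfolding P1_def[symmetric] by linarith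
qed

lemma exists_dist: "\<exists>P::'a::finite \<Rightarrow> real. is_dist P"
proof -
  have c: "real CARD('a) > 0" by simp
  show ?thesis
    by (rule exI[of _ "\<lambda>_. 1 / real CARD('a)"]) (use c in \<open>simp add: is_dist_def\<close>)
qed

lemma dist_marg:
  fixes P12 :: "('x1::finite \<times> 'x2::finite) \<Rightarrow> real"
  assumes "is_dist P12"
  shows "is_dist (\<lambda>x1. \<Sum>x2\<in>UNIV. P12 (x1,x2))"
  using assms unfolding is_dist_def sum_pair_UNIV[of P12]
  by (auto intro: sum_nonneg)

lemma chan_prod:
  fixes W1 :: "'x1::finite \<Rightarrow> 'y1::finite \<Rightarrow> real" and W2 :: "'x2::finite \<Rightarrow> 'y2::finite \<Rightarrow> real"
  assumes "is_channel W1" "is_channel W2"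
  shows "is_channel (prod_channel W1 W2)"
  unfolding is_channel_def
proof
  fix z :: "'x1 \<times> 'x2"
  obtain x1 x2 where z: "z = (x1,x2)" by (cases z)
  have d1: "is_dist (W1 x1)" and d2: "is_dist (W2 x2)" using assms unfolding is_channel_def by auto
  have "is_dist (\<lambda>(y1,y2). W1 x1 y1 * W2 x2 y2)" by (rule dist_prod[OF d1 d2])
  moreover have "prod_channel W1 W2 z = (\<lambda>(y1,y2). W1 x1 y1 * W2 x2 y2)"
    unfolding prod_channel_def z by simp
  ultimately show "is_dist (prod_channel W1 W2 z)" by simp
qed

lemma Phi_not_minf: "Phi t \<noteq> -\<infinity>"
  unfolding Phi_def by auto

lemma Phi_mult:
  assumes "a \<ge> 0" "b \<ge> 0"
  shows "Phi (a * b) = Phi a + Phi b"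
proof (cases "a = 0 \<or> b = 0")
  case True
  then show ?thesis unfolding Phi_def by auto
next
  case False
  then have "a > 0" "b > 0" using assms by auto
  then show ?thesis unfolding Phi_def by (simp add: ln_mult)
qed

lemma Phi_le_D:
  assumes "t \<ge> 0" "Phi t \<le> ereal u"
  shows "exp (-u) \<le> t"
proof -
  have "t \<noteq> 0" using assms unfolding Phi_def by (auto split: if_splits)
  then have tp: "t > 0" using assms by simp
  then have "- ln t \<le> u" using assms unfolding Phi_def by simp
  then have "-u \<le> ln t" by simp
  then have "exp (-u) \<le> exp (ln t)" by simp
  then show ?thesis using tp by simp
qed

lemma Phi_le_I:
  assumes "exp (-u) \<le> t"
  shows "Phi t \<le> ereal u"
proof -
  have tp: "t > 0" using assms by (meson exp_gt_zero less_le_trans)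
  have "ln (exp (-u)) \<le> ln t" using assms tp by (subst ln_le_cancel_iff) auto
  then have "- ln t \<le> u" by simp
  then show ?thesis unfolding Phi_def using tp by simp
qed

lemma U_eq:
  fixes W :: "'x::finite \<Rightarrow> 'y::finite \<Rightarrow> real"
  assumes "0 < \<alpha>" "\<alpha> \<noteq> 1" "is_channel W"
  shows "U_alpha \<alpha> W = (SUP P\<in>{P. is_dist P}. Phi (hh \<alpha> W P))"
  unfolding U_alpha_def
  by (rule SUP_cong) (use V_eq[OF assms(1,2) _ assms(3)] in auto)

lemma U_not_minf:
  fixes W :: "'x::finite \<Rightarrow> 'y::finite \<Rightarrow> real"
  assumes "0 < \<alpha>" "\<alpha> \<noteq> 1" "is_channel W"
  shows "U_alpha \<alpha> W \<noteq> -\<infinity>"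
proof -
  obtain P :: "'x \<Rightarrow> real" where P: "is_dist P" using exists_dist by blast
  have "Phi (hh \<alpha> W P) \<le> U_alpha \<alpha> W" unfolding U_eq[OF assms]
    by (rule SUP_upper) (use P in auto)
  then show ?thesis using Phi_not_minf[of "hh \<alpha> W P"] by auto
qed

theorem mainTheorem13:
  fixes \<alpha> :: real
    and W1 :: "'x1::finite \<Rightarrow> 'y1::finite \<Rightarrow> real"
    and W2 :: "'x2::finite \<Rightarrow> 'y2::finite \<Rightarrow> real"
  assumes "0 < \<alpha>" and "\<alpha> \<noteq> 1"
    and "is_channel W1" and "is_channel W2"
  shows "U_alpha \<alpha> (prod_channel W1 W2) = U_alpha \<alpha> W1 + U_alpha \<alpha> W2"
proof -
  note a0 = assms(1) and a1 = assms(2) and c1 = assms(3) and c2 = assms(4)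
  have c12: "is_channel (prod_channel W1 W2)" by (rule chan_prod[OF c1 c2])
  have U12: "U_alpha \<alpha> (prod_channel W1 W2) = (SUP P\<in>{P. is_dist P}. Phi (hh \<alpha> (prod_channel W1 W2) P))"
    by (rule U_eq[OF a0 a1 c12])
  have U1: "U_alpha \<alpha> W1 = (SUP P\<in>{P. is_dist P}. Phi (hh \<alpha> W1 P))"
    by (rule U_eq[OF a0 a1 c1])
  have U2: "U_alpha \<alpha> W2 = (SUP P\<in>{P. is_dist P}. Phi (hh \<alpha> W2 P))"
    by (rule U_eq[OF a0 a1 c2])
  have n1: "U_alpha \<alpha> W1 \<noteq> -\<infinity>" by (rule U_not_minf[OF a0 a1 c1])
  have n2: "U_alpha \<alpha> W2 \<noteq> -\<infinity>" by (rule U_not_minf[OF a0 a1 c2])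
  have ne1: "{P::'x1 \<Rightarrow> real. is_dist P} \<noteq> {}" using exists_dist by blast
  have ne2: "{P::'x2 \<Rightarrow> real. is_dist P} \<noteq> {}" using exists_dist by blast
  have le: "U_alpha \<alpha> (prod_channel W1 W2) \<le> U_alpha \<alpha> W1 + U_alpha \<alpha> W2"
    unfolding U12
  proof (rule SUP_least)
    fix P12 :: "'x1 \<times> 'x2 \<Rightarrow> real" assume "P12 \<in> {P. is_dist P}"
    then have dP: "is_dist P12" by simp
    show "Phi (hh \<alpha> (prod_channel W1 W2) P12) \<le> U_alpha \<alpha> W1 + U_alpha \<alpha> W2"
    proof (cases "U_alpha \<alpha> W1 = \<infinity> \<or> U_alpha \<alpha> W2 = \<infinity>")
      case True
      have e: "U_alpha \<alpha> W1 + U_alpha \<alpha> W2 = \<infinity>" using True n1 n2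
        by (cases "U_alpha \<alpha> W1"; cases "U_alpha \<alpha> W2") auto
      show "Phi (hh \<alpha> (prod_channel W1 W2) P12) \<le> U_alpha \<alpha> W1 + U_alpha \<alpha> W2"
        unfolding e by simp
    next
      case False
      then obtain u1 u2 where u1: "U_alpha \<alpha> W1 = ereal u1" and u2: "U_alpha \<alpha> W2 = ereal u2"
        using n1 n2 by (meson ereal_cases)
      have L2: "exp (-u2) \<le> hh \<alpha> W2 Q" if "is_dist Q" for Q
      proof (rule Phi_le_D[OF hh_nonneg])
        have "Phi (hh \<alpha> W2 Q) \<le> U_alpha \<alpha> W2" unfolding U2
          by (rule SUP_upper) (use that in auto)
        then show "Phi (hh \<alpha> W2 Q) \<le> ereal u2" using u2 by simp
      qed
      have L1: "exp (-u1) \<le> hh \<alpha> W1 (\<lambda>x1. \<Sum>x2\<in>UNIV. P12 (x1,x2))"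
      proof (rule Phi_le_D[OF hh_nonneg])
        have "Phi (hh \<alpha> W1 (\<lambda>x1. \<Sum>x2\<in>UNIV. P12 (x1,x2))) \<le> U_alpha \<alpha> W1" unfolding U1
          by (rule SUP_upper) (use dist_marg[OF dP] in auto)
        then show "Phi (hh \<alpha> W1 (\<lambda>x1. \<Sum>x2\<in>UNIV. P12 (x1,x2))) \<le> ereal u1" using u1 by simp
      qed
      have "hh \<alpha> W1 (\<lambda>x1. \<Sum>x2\<in>UNIV. P12 (x1,x2)) * exp (-u2) \<le> hh \<alpha> (prod_channel W1 W2) P12"
        by (rule hh_lower[OF dP c1 c2]) (use L2 in auto)
      moreover have "exp (-u1) * exp (-u2) \<le> hh \<alpha> W1 (\<lambda>x1. \<Sum>x2\<in>UNIV. P12 (x1,x2)) * exp (-u2)"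
        using L1 by simp
      ultimately have "exp (-(u1+u2)) \<le> hh \<alpha> (prod_channel W1 W2) P12"
        by (simp add: exp_add[symmetric])
      then have "Phi (hh \<alpha> (prod_channel W1 W2) P12) \<le> ereal (u1+u2)" by (rule Phi_le_I)
      then show ?thesis using u1 u2 by simp
    qed
  qed
  have ge: "U_alpha \<alpha> W1 + U_alpha \<alpha> W2 \<le> U_alpha \<alpha> (prod_channel W1 W2)"
  proof -
    have pr: "Phi (hh \<alpha> W1 P1) + Phi (hh \<alpha> W2 P2) \<le> U_alpha \<alpha> (prod_channel W1 W2)"
      if d1: "is_dist P1" and d2: "is_dist P2" for P1 :: "'x1 \<Rightarrow> real" and P2 :: "'x2 \<Rightarrow> real"
    proof -
      have "Phi (hh \<alpha> W1 P1) + Phi (hh \<alpha> W2 P2) = Phi (hh \<alpha> (prod_channel W1 W2) (\<lambda>(x1,x2). P1 x1 * P2 x2))"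
        unfolding hh_prod[OF d1 d2 c1 c2] by (rule Phi_mult[OF hh_nonneg hh_nonneg, symmetric])
      also have "\<dots> \<le> U_alpha \<alpha> (prod_channel W1 W2)" unfolding U12
        by (rule SUP_upper) (use dist_prod[OF d1 d2] in auto)
      finally show ?thesis .
    qed
    have "U_alpha \<alpha> W1 + U_alpha \<alpha> W2 = (SUP P1\<in>{P. is_dist P}. Phi (hh \<alpha> W1 P1) + U_alpha \<alpha> W2)"
      unfolding U1 using SUP_ereal_add_left[OF ne1 n2, of "\<lambda>P. Phi (hh \<alpha> W1 P)"] by simp
    also have "\<dots> \<le> U_alpha \<alpha> (prod_channel W1 W2)"
    proof (rule SUP_least)
      fix P1 :: "'x1 \<Rightarrow> real" assume "P1 \<in> {P. is_dist P}"
      then have d1: "is_dist P1" by simp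
      have "Phi (hh \<alpha> W1 P1) + U_alpha \<alpha> W2 = (SUP P2\<in>{P. is_dist P}. Phi (hh \<alpha> W1 P1) + Phi (hh \<alpha> W2 P2))"
        unfolding U2 using SUP_ereal_add_right[OF ne2 Phi_not_minf, of "hh \<alpha> W1 P1" "\<lambda>P. Phi (hh \<alpha> W2 P)"] by simp
      also have "\<dots> \<le> U_alpha \<alpha> (prod_channel W1 W2)"
        by (rule SUP_least) (use pr[OF d1] in auto)
      finally show "Phi (hh \<alpha> W1 P1) + U_alpha \<alpha> W2 \<le> U_alpha \<alpha> (prod_channel W1 W2)" .
    qed
    finally show ?thesis .
  qed
  show ?thesis using le ge by (rule antisym)
qed

end
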